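(* Let $G$ be a connected threshold graph of order $n\ge 4$ and size $m$ with $n-1<m<\binom{n}{2}$, let $c$ be its number of type 1 vertices, $(b_1,\ldots,b_z)$ its backwards zero position sequence and $F_1=\sum_{i=1}^z b_i^2$. Let $\xi\in\mathbb{R}$ be the greatest real root of $P(x)=x^3-(c+1)x^2+cx-F_1$. Then $\xi$ is a simple root of $P$ and $|\xi|>|\eta|$ for every other (complex) root $\eta$ of $P$.
   Context: A threshold graph is a simple graph whose vertices can be ordered $v_1,\ldots,v_n$ so that for each $2\le i\le n$, $v_i$ is either adjacent to all of $v_1,\ldots,v_{i-1}$ (then $a_i=1$) or to none of them (then $a_i=0$); by convention $a_1=1$. Vertex $v_i$ is of type 1 if $a_i=1$ and of type 0 if $a_i=0$; $c$ and $z$ are the numbers of type 1 and type 0 vertices (here $c \ge 3$, $z\ge 1$). The backwards zero position sequence $(b_1,\ldots,b_z)$ is defined by letting $b_i$ be the number of type 1 vertices appearing after the $i$-th type 0 vertex in the order $v_1,\ldots,v_n$. *)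

theory Defs
  imports Complex_Main "HOL-Computational_Algebra.Polynomial"
begin

definition simple_graph :: "'a set \<Rightarrow> ('a \<Rightarrow> 'a \<Rightarrow> bool) \<Rightarrow> bool" where
  "simple_graph V E \<longleftrightarrow> finite V \<and> (\<forall>x y. E x y \<longrightarrow> x \<in> V \<and> y \<in> V)
     \<and> (\<forall>x y. E x y \<longrightarrow> E y x) \<and> (\<forall>x. \<not> E x x)"

definition graph_connected :: "'a set \<Rightarrow> ('a \<Rightarrow> 'a \<Rightarrow> bool) \<Rightarrow> bool" where
  "graph_connected V E \<longleftrightarrow> (\<forall>x\<in>V. \<forall>y\<in>V. E\<^sup>*\<^sup>* x y)"

definition graph_size :: "'a set \<Rightarrow> ('a \<Rightarrow> 'a \<Rightarrow> bool) \<Rightarrow> nat" where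
  "graph_size V E = card {{x, y} | x y. x \<in> V \<and> y \<in> V \<and> E x y}"

text \<open>Creation ordering of a threshold graph (0-indexed): the list vs enumerates V
  without repetition, a!i is the type of vertex vs!i, and vs!i is adjacent to all
  earlier vertices if a!i and to none of them otherwise.\<close>
definition threshold_order ::
  "'a set \<Rightarrow> ('a \<Rightarrow> 'a \<Rightarrow> bool) \<Rightarrow> 'a list \<Rightarrow> bool list \<Rightarrow> bool" where
  "threshold_order V E vs a \<longleftrightarrow> distinct vs \<and> set vs = V \<and> length a = length vs
     \<and> (length a > 0 \<longrightarrow> a ! 0)
     \<and> (\<forall>i < length vs. \<forall>j < i. E (vs ! i) (vs ! j) = a ! i)"

definition type1_count :: "bool list \<Rightarrow> nat" where
  "type1_count a = card {i. i < length a \<and> a ! i}"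

text \<open>b-value of a type 0 vertex at position p: number of type 1 vertices after it.\<close>
definition bwd_zero :: "bool list \<Rightarrow> nat \<Rightarrow> nat" where
  "bwd_zero a p = card {j. p < j \<and> j < length a \<and> a ! j}"

definition F1 :: "bool list \<Rightarrow> nat" where
  "F1 a = (\<Sum>p \<in> {p. p < length a \<and> \<not> a ! p}. (bwd_zero a p)^2)"

end

theory Submission
  imports Defs
begin

lemma alg:
  fixes c F \<xi> :: real
  defines "p \<equiv> [:- F, c, - (c + 1), 1:]"
  assumes c2: "c \<ge> 2" and F0: "F \<ge> 0"
    and r: "poly p \<xi> = 0"
    and mx: "\<forall>x::real. poly p x = 0 \<longrightarrow> x \<le> \<xi>"
  shows "order \<xi> p = 1
    \<and> (\<forall>\<eta>::complex. poly (map_poly complex_of_real p) \<eta> = 0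
        \<and> \<eta> \<noteq> complex_of_real \<xi> \<longrightarrow> cmod \<eta> < \<bar>\<xi>\<bar>)"
proof -
  have pe: "poly p x = x*(x-1)*(x-c) - F" for x
    unfolding p_def by (simp add: algebra_simps power2_eq_square power3_eq_cube)
  have xc: "\<xi> \<ge> c"
  proof (cases "F = 0")
    case True
    then have "poly p c = 0" using pe by simp
    then show ?thesis using mx by blast
  next
    case False
    then have "poly p c < 0" using pe F0 by simp
    moreover have "poly p (c + 1 + F) > 0"
    proof -
      have "(c+1+F)*(c+F) \<ge> 1" using c2 F0
      proof -
        have "c+1+F \<ge> 1" "c+F \<ge> 1" using c2 F0 by auto
        then show ?thesis using mult_mono[of 1 "c+1+F" 1 "c+F"] by simp
      qed
      then have "(c+1+F)*(c+F)*(1+F) \<ge> 1 + F" using F0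
        using mult_right_mono[of 1 "(c+1+F)*(c+F)" "1+F"] by simp
      moreover have "poly p (c + 1 + F) = (c+1+F)*(c+F)*(1+F) - F" using pe[of "c+1+F"] by (simp add: algebra_simps)
      ultimately show ?thesis by simp
    qed
    moreover have "c < c + 1 + F" using F0 by simp
    ultimately obtain x where "c < x" "poly p x = 0" using poly_IVT_pos by blast
    then show ?thesis using mx by fastforce
  qed
  have pd: "poly (pderiv p) \<xi> = 3*\<xi>^2 - 2*(c+1)*\<xi> + c"
    unfolding p_def by (simp add: pderiv_pCons algebra_simps power2_eq_square)
  have "\<xi> * (3*\<xi> - 2*c - 2) \<ge> 0" using xc c2 by simp
  then have pd0: "poly (pderiv p) \<xi> \<noteq> 0" using pd c2 by (simp add: algebra_simps power2_eq_square)
  have pn: "p \<noteq> 0" unfolding p_def by simp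
  have o1: "order \<xi> p = 1"
  proof -
    have "order \<xi> (pderiv p) = 0" using pd0 by (metis order_0I)
    then show ?thesis using order_pderiv[OF pn r] by simp
  qed
  have cx: "\<forall>\<eta>::complex. poly (map_poly complex_of_real p) \<eta> = 0
        \<and> \<eta> \<noteq> complex_of_real \<xi> \<longrightarrow> cmod \<eta> < \<bar>\<xi>\<bar>"
  proof (intro allI impI, elim conjE)
    fix \<eta> :: complex
    assume h: "poly (map_poly complex_of_real p) \<eta> = 0" and ne: "\<eta> \<noteq> complex_of_real \<xi>"
    have pc: "poly (map_poly complex_of_real p) z = z*(z-1)*(z-of_real c) - of_real F" for z
      unfolding p_def by (simp add: map_poly_pCons algebra_simps power2_eq_square power3_eq_cube)
    have rc: "complex_of_real \<xi> * (complex_of_real \<xi> - 1) * (complex_of_real \<xi> - of_real c) - of_real F = 0"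
      using r pe by (metis (mono_tags, lifting) of_real_0 of_real_1 of_real_diff of_real_mult)
    define B where "B = \<xi> - c - 1"
    define C where "C = (\<xi> - 1) * (\<xi> - c)"
    have "(\<eta> - of_real \<xi>) * (\<eta>^2 + of_real B * \<eta> + of_real C) = 
       (\<eta>*(\<eta>-1)*(\<eta>-of_real c) - of_real F) - (complex_of_real \<xi> * (complex_of_real \<xi> - 1) * (complex_of_real \<xi> - of_real c) - of_real F)"
      unfolding B_def C_def by (simp add: algebra_simps power2_eq_square)
    also have "\<dots> = 0" using h pc rc by simp
    finally have q: "\<eta>^2 + of_real B * \<eta> + of_real C = 0" using ne by simp
    obtain x y where xy: "\<eta> = Complex x y" by (cases \<eta>)
    from q have e1: "x*x - y*y + B*x + C = 0" and e2: "2*x*y + B*y = 0"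
      unfolding xy by (simp_all add: complex_eq_iff power2_eq_square algebra_simps)
    show "cmod \<eta> < \<bar>\<xi>\<bar>"
    proof (cases "y = 0")
      case True
      then have ex: "\<eta> = of_real x" using xy by (simp add: complex_eq_iff)
      then have "poly p x = 0" using h pc pe
        by (metis (no_types, lifting) of_real_0 of_real_1 of_real_diff of_real_eq_iff of_real_mult)
      then have "x \<le> \<xi>" "x \<noteq> \<xi>" using mx ne ex by auto
      moreover have "x \<ge> 0"
      proof (rule ccontr)
        assume "\<not> x \<ge> 0"
        then have "x < 0" by simp
        then have "x*(x-1) > 0" by (simp add: mult_neg_neg)
        then have "x*(x-1)*(x-c) < 0" using \<open>x<0\<close> c2 by (simp add: mult_pos_neg)
        then show False using \<open>poly p x = 0\<close> pe F0 by simp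
      qed
      ultimately show ?thesis using ex xc c2 by simp
    next
      case False
      then have "2*x + B = 0" using e2 by (metis distrib_right mult.commute mult_eq_0_iff)
      then have "B = -2*x" by simp
      then have "x*x + y*y = C" using e1 by (simp add: algebra_simps)
      moreover have "C < \<xi>^2"
      proof -
        have "\<xi> * c > 0" using xc c2 by simp
        then have "c < \<xi> + \<xi> * c" using xc c2 by linarith
        then show ?thesis unfolding C_def by (simp add: algebra_simps power2_eq_square)
      qed
      moreover have "(cmod \<eta>)^2 = x*x+y*y" unfolding xy cmod_power2 by (simp add: power2_eq_square)
      ultimately have "(cmod \<eta>)^2 < \<xi>^2" by simp
      then show ?thesis using xc c2 
        using power_less_imp_less_base[of "cmod \<eta>" 2 \<xi>] by simp
    qed
  qed
  show ?thesis using o1 cx by blast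
qed

lemma c_ge2:
  assumes sg: "simple_graph V E" and th: "threshold_order V E vs a"
    and cn: "graph_connected V E" and n4: "card V \<ge> 4"
  shows "type1_count a \<ge> 2"
proof -
  have d: "distinct vs" and sv: "set vs = V" and la: "length a = length vs"
    and a0: "length a > 0 \<longrightarrow> a ! 0"
    and ad: "\<forall>i < length vs. \<forall>j < i. E (vs ! i) (vs ! j) = a ! i"
    using th unfolding threshold_order_def by auto
  define n where "n = length vs"
  have nV: "n = card V" using d sv distinct_card n_def by metis
  then have n4': "n \<ge> 4" using n4 by simp
  have irr: "\<And>x. \<not> E x x" using sg unfolding simple_graph_def by auto
  let ?v = "vs ! (n - 1)"
  have vV: "?v \<in> V" "vs ! 0 \<in> V" using sv n4' n_def by (auto intro!: nth_mem)
  have neq: "?v \<noteq> vs ! 0" using nth_eq_iff_index_eq[OF d, of "n-1" 0] n4' n_def by force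
  have rt: "E\<^sup>*\<^sup>* ?v (vs ! 0)" using cn vV unfolding graph_connected_def by auto
  then obtain y where Ey: "E ?v y" using converse_rtranclpE[OF rt] neq by blast
  then have "y \<in> V" using sg unfolding simple_graph_def by auto
  then obtain j where j: "j < n" "y = vs ! j" using sv n_def by (metis in_set_conv_nth)
  have "j \<noteq> n - 1"
  proof
    assume "j = n - 1"
    then show False using Ey j irr by simp
  qed
  then have "j < n - 1" using j by simp
  moreover have "n - 1 < length vs" using n_def n4' by simp
  ultimately have "E (vs ! (n - 1)) (vs ! j) = a ! (n - 1)" using ad by blast
  then have an: "a ! (n - 1)" using Ey j by simp
  have "{0, n - 1} \<subseteq> {i. i < length a \<and> a ! i}" using an a0 la n_def n4' by auto
  then have "card {0, n - 1} \<le> type1_count a" unfolding type1_count_def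
    by (intro card_mono) auto
  moreover have "card {0, n - 1} = 2" using n4' by simp
  ultimately show ?thesis by simp
qed

theorem lemma4p3:
  fixes V :: "'a set" and E :: "'a \<Rightarrow> 'a \<Rightarrow> bool"
    and vs :: "'a list" and a :: "bool list" and \<xi> :: real
  assumes "simple_graph V E"
    and "threshold_order V E vs a"
    and "graph_connected V E"
    and "card V \<ge> 4"
    and "card V - 1 < graph_size V E"
    and "graph_size V E < card V choose 2"
    and "poly [:- real (F1 a), real (type1_count a), - (real (type1_count a) + 1), 1:] \<xi> = 0"
    and "\<forall>x::real. poly [:- real (F1 a), real (type1_count a), - (real (type1_count a) + 1), 1:] x = 0 \<longrightarrow> x \<le> \<xi>"
  shows "order \<xi> [:- real (F1 a), real (type1_count a), - (real (type1_count a) + 1), 1:] = 1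
    \<and> (\<forall>\<eta>::complex. poly (map_poly complex_of_real
          [:- real (F1 a), real (type1_count a), - (real (type1_count a) + 1), 1:]) \<eta> = 0
        \<and> \<eta> \<noteq> complex_of_real \<xi> \<longrightarrow> cmod \<eta> < \<bar>\<xi>\<bar>)"
proof -
  have "type1_count a \<ge> 2" using c_ge2 assms(1-4) by blast
  then have "real (type1_count a) \<ge> 2" by simp
  then show ?thesis using alg[of "real (type1_count a)" "real (F1 a)" \<xi>] assms(7,8) by simp
qed

end
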